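(* Let $k\ge3$, let $G$ be a graph and $L$ a $k$-list assignment for $G$. Let $B$ be a bug in $G$ whose root $r$ has $d_G(r)\le 1$. Then $B$ is safe in $G$ if at least one of the following holds: $|V(B)|\ge2$; there is no edge between $V(B)$ and $V(G)\setminus V(B)$; $|V(G)|\not\equiv 0\pmod k$.
   Context: $V_{3^+}(G)$ is the set of vertices of degree at least $3$ in $G$. A bug in $G$ is an induced connected subgraph $B$ together with a vertex $r\in V(B)$, its root, such that $V(B)\cap V_{3^+}(G)\subseteq\{r\}$. A $k$-list assignment $L$ assigns to each vertex $v$ a set $L(v)$ of exactly $k$ colors; an $L$-coloring is a proper vertex coloring $f$ with $f(v)\in L(v)$. For an integer $n$ and $k\ge1$, $n\bmod^* k$ is the unique $m\in\{1,\dots,k\}$ with $n\equiv m\pmod k$. If $|V(G)|=n\ge 1$, an $L$-coloring $f$ of $G$ is strongly equitable (SE) if every color class has at most $\lceil n/k\rceil$ vertices and the number of colors whose class has exactly $\lceil n/k\rceil$ vertices (the full classes) is at most $n\bmod^* k$; the empty graph is regarded as SE $L$-colorable. A subgraph $S\subseteq G$ is safe in $G$ if every SE $L$-coloring of $G-V(S)$ (with the restriction of $L$) can be extended to an SE $L$-coloring of $G$. *)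

theory Defs
  imports Main
begin

definition graph :: "'a set \<Rightarrow> ('a \<Rightarrow> 'a \<Rightarrow> bool) \<Rightarrow> bool" where
  "graph V E \<longleftrightarrow> finite V \<and> (\<forall>x y. E x y \<longrightarrow> x \<in> V \<and> y \<in> V)
     \<and> (\<forall>x y. E x y \<longrightarrow> E y x) \<and> (\<forall>x. \<not> E x x)"

definition deg :: "'a set \<Rightarrow> ('a \<Rightarrow> 'a \<Rightarrow> bool) \<Rightarrow> 'a \<Rightarrow> nat" where
  "deg V E v = card {u \<in> V. E v u}"

definition V3plus :: "'a set \<Rightarrow> ('a \<Rightarrow> 'a \<Rightarrow> bool) \<Rightarrow> 'a set" where
  "V3plus V E = {v \<in> V. deg V E v \<ge> 3}"

definition induced_connected :: "'a set \<Rightarrow> ('a \<Rightarrow> 'a \<Rightarrow> bool) \<Rightarrow> bool" where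
  "induced_connected S E \<longleftrightarrow> S \<noteq> {} \<and>
     (\<forall>x\<in>S. \<forall>y\<in>S. (x, y) \<in> {(a, b). a \<in> S \<and> b \<in> S \<and> E a b}\<^sup>*)"

definition bug :: "'a set \<Rightarrow> ('a \<Rightarrow> 'a \<Rightarrow> bool) \<Rightarrow> 'a set \<Rightarrow> 'a \<Rightarrow> bool" where
  "bug V E S r \<longleftrightarrow> S \<subseteq> V \<and> r \<in> S \<and> induced_connected S E \<and> S \<inter> V3plus V E \<subseteq> {r}"

definition list_assignment :: "nat \<Rightarrow> 'a set \<Rightarrow> ('a \<Rightarrow> 'c set) \<Rightarrow> bool" where
  "list_assignment k V L \<longleftrightarrow> (\<forall>v\<in>V. finite (L v) \<and> card (L v) = k)"

definition L_coloring :: "'a set \<Rightarrow> ('a \<Rightarrow> 'a \<Rightarrow> bool) \<Rightarrow> ('a \<Rightarrow> 'c set) \<Rightarrow> ('a \<Rightarrow> 'c) \<Rightarrow> bool" where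
  "L_coloring V E L f \<longleftrightarrow> (\<forall>v\<in>V. f v \<in> L v) \<and> (\<forall>x\<in>V. \<forall>y\<in>V. E x y \<longrightarrow> f x \<noteq> f y)"

text \<open>ceil(n/k) and n mod* k (the unique m in {1..k} with n = m mod k).\<close>
definition ceil_div :: "nat \<Rightarrow> nat \<Rightarrow> nat" where
  "ceil_div n k = (n + k - 1) div k"

definition mod_star :: "nat \<Rightarrow> nat \<Rightarrow> nat" where
  "mod_star n k = ((n + k - 1) mod k) + 1"

definition color_class :: "'a set \<Rightarrow> ('a \<Rightarrow> 'c) \<Rightarrow> 'c \<Rightarrow> 'a set" where
  "color_class V f c = {v \<in> V. f v = c}"

definition SE_coloring :: "nat \<Rightarrow> 'a set \<Rightarrow> ('a \<Rightarrow> 'a \<Rightarrow> bool) \<Rightarrow> ('a \<Rightarrow> 'c set) \<Rightarrow> ('a \<Rightarrow> 'c) \<Rightarrow> bool" where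
  "SE_coloring k V E L f \<longleftrightarrow> L_coloring V E L f \<and>
     (V \<noteq> {} \<longrightarrow>
       (\<forall>c. card (color_class V f c) \<le> ceil_div (card V) k) \<and>
       card {c. card (color_class V f c) = ceil_div (card V) k} \<le> mod_star (card V) k)"

definition safe :: "nat \<Rightarrow> 'a set \<Rightarrow> ('a \<Rightarrow> 'a \<Rightarrow> bool) \<Rightarrow> ('a \<Rightarrow> 'c set) \<Rightarrow> 'a set \<Rightarrow> bool" where
  "safe k V E L S \<longleftrightarrow> (\<forall>f. SE_coloring k (V - S) E L f \<longrightarrow>
      (\<exists>g. SE_coloring k V E L g \<and> (\<forall>v \<in> V - S. g v = f v)))"

end

theory Submission
  imports Defs
begin


lemma cd_suc: assumes k: "k \<ge> 1" shows "ceil_div (Suc n) k = (if n mod k = 0 then ceil_div n k + 1 else ceil_div n k)"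
proof (cases n)
  case 0
  then show ?thesis using k by (simp add: ceil_div_def)
next
  case (Suc m)
  have a: "ceil_div (Suc n) k = n div k + 1"
    unfolding ceil_div_def using k by (simp add: div_add_self2[of k] del: div_add_self2)
  have b: "ceil_div n k = m div k + 1" unfolding ceil_div_def using k Suc
    by (metis add.commute add_Suc_right add_diff_cancel_left' div_add_self2 le_add_diff_inverse not_one_le_zero plus_1_eq_Suc)
  show ?thesis using a b Suc k by (simp add: div_Suc)
qed

lemma ms_suc: "k \<ge> 2 \<Longrightarrow> mod_star (Suc n) k = (if n mod k = 0 then 1 else mod_star n k + 1)"
proof (cases n)
  case 0
  assume "k \<ge> 2" then show ?thesis using 0 by (simp add: mod_star_def)
next
  case (Suc m)
  assume k: "k \<ge> 2"
  have a: "mod_star (Suc n) k = n mod k + 1" unfolding mod_star_def using k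
    by (metis Suc_1 Suc_le_D add.commute add_Suc_right add_diff_cancel_left' mod_add_self2 plus_1_eq_Suc)
  have b: "mod_star n k = m mod k + 1" unfolding mod_star_def using k Suc
    by (metis add.commute add_Suc_right add_diff_cancel_left' le_add_diff_inverse mod_add_self2 not_one_le_zero plus_1_eq_Suc Suc_leD Suc_1)
  show ?thesis using a b Suc k by (simp add: mod_Suc)
qed

lemma ms_eq: assumes "n mod k \<noteq> 0" "k \<ge> 1" shows "mod_star n k = n mod k"
proof (cases n)
  case 0 then show ?thesis using assms by simp
next
  case (Suc m)
  note h = assms(1) and k = assms(2)
  have "mod_star n k = m mod k + 1" unfolding mod_star_def using k Suc
    by (metis add.commute add_Suc_right add_diff_cancel_left' le_add_diff_inverse mod_add_self2 plus_1_eq_Suc)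
  then show ?thesis using h Suc by (simp add: mod_Suc split: if_splits)
qed

lemma cd_pos: "n \<ge> 1 \<Longrightarrow> k \<ge> 1 \<Longrightarrow> ceil_div n k \<ge> 1"
proof -
  assume "n \<ge> 1" "k \<ge> 1"
  then have "n + k - 1 \<ge> k" by simp
  then show ?thesis unfolding ceil_div_def using \<open>k \<ge> 1\<close>
    by (metis One_nat_def Suc_le_eq div_greater_zero_iff le_less_trans less_one not_less)
qed




definition full :: "nat \<Rightarrow> 'a set \<Rightarrow> ('a \<Rightarrow> 'c) \<Rightarrow> 'c set" where
  "full k U f = {c. card (color_class U f c) = ceil_div (card U) k}"

lemma class_finite: "finite U \<Longrightarrow> finite (color_class U f c)"
  unfolding color_class_def by simp

lemma full_sub: assumes "finite U" "U \<noteq> {}" "k \<ge> 1" shows "full k U f \<subseteq> f ` U"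
proof
  fix c assume "c \<in> full k U f"
  then have "card (color_class U f c) \<ge> 1" unfolding full_def using cd_pos[of "card U" k] assms
    by (simp add: Suc_le_eq card_gt_0_iff)
  then have "color_class U f c \<noteq> {}" by auto
  then show "c \<in> f ` U" unfolding color_class_def by auto
qed

lemma full_finite: "finite U \<Longrightarrow> U \<noteq> {} \<Longrightarrow> k \<ge> 1 \<Longrightarrow> finite (full k U f)"
  by (rule finite_subset[OF full_sub finite_imageI])

lemma SE_bound: assumes "SE_coloring k U E L f" shows "card (color_class U f c) \<le> ceil_div (card U) k"
proof (cases "U = {}")
  case True then show ?thesis by (simp add: color_class_def)
next
  case False then show ?thesis using assms unfolding SE_coloring_def by simp
qed

lemma SE_full: assumes "SE_coloring k U E L f" "U \<noteq> {}" shows "card (full k U f) \<le> mod_star (card U) k"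
  using assms unfolding SE_coloring_def full_def by simp

lemma class_upd: "v \<notin> U \<Longrightarrow> color_class (insert v U) (f(v:=c)) c' =
   (if c' = c then insert v (color_class U f c) else color_class U f c')"
  unfolding color_class_def by auto

lemma add_vertex:
  assumes k: "k \<ge> 3" and fin: "finite U" and vU: "v \<notin> U" and SE: "SE_coloring k U E L f"
    and sym: "\<forall>x y. E x y \<longrightarrow> E y x" and irr: "\<forall>x. \<not> E x x"
    and cL: "c \<in> L v" and nb: "\<forall>u\<in>U. E v u \<longrightarrow> f u \<noteq> c"
    and nf: "card U mod k \<noteq> 0 \<longrightarrow> c \<notin> full k U f"
  shows "SE_coloring k (insert v U) E L (f(v:=c)) \<and>
    (card (insert v U) mod k = k - 1 \<longrightarrow> card (full k (insert v U) (f(v:=c)) \<union> {c}) \<le> k - 1)"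
proof -
  let ?W = "insert v U" and ?g = "f(v:=c)"
  define n where "n = card U"
  have cW: "card ?W = Suc n" using fin vU n_def by simp
  have k1: "k \<ge> 1" "k \<ge> 2" using k by auto
  have Lf: "L_coloring U E L f" using SE unfolding SE_coloring_def by simp
  have Lc: "L_coloring ?W E L ?g"
    unfolding L_coloring_def
  proof (intro conjI ballI impI)
    fix x assume "x \<in> ?W" then show "?g x \<in> L x" using Lf cL unfolding L_coloring_def by auto
  next
    fix x y assume x: "x \<in> ?W" and y: "y \<in> ?W" and e: "E x y"
    show "?g x \<noteq> ?g y"
    proof (cases "x = v")
      case True
      then have "y \<noteq> v" using e irr by blast
      then have "y \<in> U" using y by blast
      then have "f y \<noteq> c" using nb e True by blast
      then show ?thesis using True \<open>y \<noteq> v\<close> by simp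
    next
      case False
      then have xU: "x \<in> U" using x by blast
      show ?thesis
      proof (cases "y = v")
        case True
        have "E v x" using sym e True by blast
        then have "f x \<noteq> c" using nb xU by blast
        then show ?thesis using True False by simp
      next
        case False
        then have "y \<in> U" using y by blast
        then show ?thesis using Lf xU e False \<open>x \<noteq> v\<close> unfolding L_coloring_def by simp
      qed
    qed
  qed
  have bU: "\<And>c'. card (color_class U f c') \<le> ceil_div n k" using SE_bound[OF SE] n_def by simp
  have cls: "\<And>c'. c' \<noteq> c \<Longrightarrow> card (color_class ?W ?g c') = card (color_class U f c')"
  proof -
    fix c' assume "c' \<noteq> c"
    then show "card (color_class ?W ?g c') = card (color_class U f c')"
      using class_upd[OF vU, of f c c'] by simp
  qed
  have clc: "card (color_class ?W ?g c) = Suc (card (color_class U f c))"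
  proof -
    have "v \<notin> color_class U f c" using vU by (simp add: color_class_def)
    then have "card (insert v (color_class U f c)) = Suc (card (color_class U f c))"
      by (rule card_insert_disjoint[OF class_finite[OF fin]])
    then show ?thesis using class_upd[OF vU, of f c c] by simp
  qed
  show ?thesis
  proof (cases "n mod k = 0")
    case True
    have cd: "ceil_div (card ?W) k = ceil_div n k + 1" using cd_suc[OF k1(1)] True cW by simp
    have ms: "mod_star (card ?W) k = 1" using ms_suc[OF k1(2)] True cW by simp
    have b: "\<forall>c'. card (color_class ?W ?g c') \<le> ceil_div (card ?W) k"
    proof
      fix c' show "card (color_class ?W ?g c') \<le> ceil_div (card ?W) k"
      proof (cases "c' = c")
        case True then show ?thesis using clc bU[of c] cd by simp
      next
        case False then show ?thesis using cls[of c'] bU[of c'] cd by simp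
      qed
    qed
    have "{c'. card (color_class ?W ?g c') = ceil_div (card ?W) k} \<subseteq> {c}"
    proof
      fix c' assume "c' \<in> {c'. card (color_class ?W ?g c') = ceil_div (card ?W) k}"
      then have h: "card (color_class ?W ?g c') = ceil_div n k + 1" using cd by simp
      show "c' \<in> {c}"
      proof (rule ccontr)
        assume "c' \<notin> {c}"
        then show False using cls[of c'] bU[of c'] h by simp
      qed
    qed
    then have "card {c'. card (color_class ?W ?g c') = ceil_div (card ?W) k} \<le> card {c}"
      by (rule card_mono[rotated]) simp
    then have "card {c'. card (color_class ?W ?g c') = ceil_div (card ?W) k} \<le> 1" by simp
    moreover have "card ?W mod k \<noteq> k - 1" using cW True k by (simp add: mod_Suc)
    ultimately have "SE_coloring k ?W E L ?g" using Lc b ms unfolding SE_coloring_def by simp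
    then show ?thesis using \<open>card ?W mod k \<noteq> k - 1\<close> by blast
  next
    case False
    have Une: "U \<noteq> {}" using False n_def by auto
    have cd: "ceil_div (card ?W) k = ceil_div n k" using cd_suc[OF k1(1)] False cW by simp
    have ms: "mod_star (card ?W) k = mod_star n k + 1" using ms_suc[OF k1(2)] False cW by simp
    have cnf: "card (color_class U f c) \<noteq> ceil_div n k" using nf False n_def unfolding full_def by simp
    have b: "\<forall>c'. card (color_class ?W ?g c') \<le> ceil_div (card ?W) k"
    proof
      fix c' show "card (color_class ?W ?g c') \<le> ceil_div (card ?W) k"
      proof (cases "c' = c")
        case True then show ?thesis using clc bU[of c] cd cnf by simp
      next
        case False then show ?thesis using cls[of c'] bU[of c'] cd by simp
      qed
    qed
    have sub: "full k ?W ?g \<subseteq> full k U f \<union> {c}"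
    proof
      fix c' assume a: "c' \<in> full k ?W ?g"
      show "c' \<in> full k U f \<union> {c}"
      proof (cases "c' = c")
        case False
        then have "card (color_class U f c') = ceil_div n k" using a cls[of c'] cd unfolding full_def by simp
        then show ?thesis unfolding full_def n_def by simp
      qed simp
    qed
    have ff: "finite (full k U f)" using full_finite[OF fin Une k1(1)] .
    have cf: "card (full k U f) \<le> mod_star n k" using SE_full[OF SE Une] n_def by simp
    have "card (full k U f \<union> {c}) \<le> mod_star n k + 1"
      using ff cf by (simp add: card_insert_if)
    then have cs: "card (full k ?W ?g \<union> {c}) \<le> mod_star n k + 1"
    proof -
      have "full k ?W ?g \<union> {c} \<subseteq> full k U f \<union> {c}" using sub by auto
      then have "card (full k ?W ?g \<union> {c}) \<le> card (full k U f \<union> {c})"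
        by (rule card_mono[rotated]) (simp add: ff)
      then show ?thesis using \<open>card (full k U f \<union> {c}) \<le> mod_star n k + 1\<close> by simp
    qed
    have "card (full k ?W ?g) \<le> mod_star (card ?W) k"
    proof -
      have "card (full k ?W ?g) \<le> card (full k ?W ?g \<union> {c})"
      proof (rule card_mono)
        have "full k ?W ?g \<union> {c} \<subseteq> full k U f \<union> {c}" using sub by blast
        then show "finite (full k ?W ?g \<union> {c})" using ff by (meson finite.emptyI finite.insertI finite_Un finite_subset)
      qed blast
      then show ?thesis using cs ms by simp
    qed
    then have se: "SE_coloring k ?W E L ?g" using Lc b unfolding SE_coloring_def full_def by simp
    have "card ?W mod k = k - 1 \<Longrightarrow> card (full k ?W ?g \<union> {c}) \<le> k - 1"
    proof -
      assume "card ?W mod k = k - 1"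
      then have "Suc n mod k = k - 1" using cW by simp
      then have "n mod k = k - 2" using False k by (simp add: mod_Suc split: if_splits)
      then have "mod_star n k + 1 \<le> k - 1" using ms_eq[OF False k1(1)] k by simp
      then show ?thesis using cs by linarith
    qed
    then show ?thesis using se by blast
  qed
qed




lemma pick:
  assumes "finite X" "card X < k" "finite A" "card A = k" shows "\<exists>c\<in>A. c \<notin> X"
proof (rule ccontr)
  assume "\<not> (\<exists>c\<in>A. c \<notin> X)"
  then have "A \<subseteq> X" by blast
  then have "card A \<le> card X" using assms(1) by (rule card_mono[rotated])
  then show False using assms by simp
qed

lemma extend_one:
  fixes V :: "'a set" and L :: "'a \<Rightarrow> 'c set"
  assumes k: "k \<ge> 3" and fin: "finite V" and sym: "\<forall>x y. E x y \<longrightarrow> E y x" and irr: "\<forall>x. \<not> E x x"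
    and la: "list_assignment k V L" and rV: "r \<in> V"
    and SE: "SE_coloring k (V - {r}) E L g'"
    and fb: "card ((if card (V - {r}) mod k = 0 then {} else full k (V - {r}) g') \<union> g' ` {u \<in> V - {r}. E r u}) < k"
  shows "\<exists>g. SE_coloring k V E L g \<and> (\<forall>v\<in>V - {r}. g v = g' v) \<and>
     (card V mod k = k - 1 \<longrightarrow> card (full k V g \<union> {g r}) \<le> k - 1)"
proof -
  let ?U = "V - {r}"
  let ?X = "(if card ?U mod k = 0 then {} else full k ?U g') \<union> g' ` {u \<in> ?U. E r u}"
  have finU: "finite ?U" using fin by simp
  have f1: "finite (if card ?U mod k = 0 then {} else full k ?U g')"
  proof (cases "card ?U mod k = 0")
    case False
    then have "card ?U \<noteq> 0" by (metis mod_0)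
    then have "?U \<noteq> {}" by (metis card.empty)
    then show ?thesis using False full_finite[OF finU _, of k g'] k by simp
  qed simp
  have fX: "finite ?X" using f1 finU by simp
  have LA: "finite (L r)" "card (L r) = k" using la rV unfolding list_assignment_def by auto
  obtain c where cL: "c \<in> L r" and cX: "c \<notin> ?X" using pick[OF fX fb LA] by blast
  have nb: "\<forall>u\<in>?U. E r u \<longrightarrow> g' u \<noteq> c" using cX by blast
  have nf: "card ?U mod k \<noteq> 0 \<longrightarrow> c \<notin> full k ?U g'" using cX by auto
  have ins: "insert r ?U = V" using rV by blast
  have "SE_coloring k (insert r ?U) E L (g'(r:=c)) \<and>
    (card (insert r ?U) mod k = k - 1 \<longrightarrow> card (full k (insert r ?U) (g'(r:=c)) \<union> {c}) \<le> k - 1)"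
    by (rule add_vertex[OF k finU _ SE sym irr cL nb nf]) simp
  then show ?thesis unfolding ins by (intro exI[of _ "g'(r:=c)"]) simp
qed

lemma nbr_img_card:
  assumes "finite V" "U \<subseteq> V" shows "card (f ` {u \<in> U. E v u}) \<le> deg V E v"
proof -
  have "card (f ` {u \<in> U. E v u}) \<le> card {u \<in> U. E v u}" by (rule card_image_le) (rule finite_subset[OF _ assms(1)], use assms(2) in auto)
  also have "\<dots> \<le> card {u \<in> V. E v u}" by (rule card_mono) (use assms in auto)
  finally show ?thesis unfolding deg_def .
qed

lemma conn_nbr:
  assumes "induced_connected S E" "r \<in> S" "x \<in> S" "x \<noteq> r" shows "\<exists>s\<in>S. E r s"
proof -
  have "(r, x) \<in> {(a, b). a \<in> S \<and> b \<in> S \<and> E a b}\<^sup>*" using assms unfolding induced_connected_def by blast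
  then show ?thesis
  proof (cases rule: converse_rtranclE)
    case base then show ?thesis using assms by simp
  next
    case (step y) then show ?thesis by blast
  qed
qed

lemma conn_remove:
  assumes ic: "induced_connected S E" and rS: "r \<in> S" and sS: "s \<in> S" and sr: "s \<noteq> r"
    and only: "\<And>u. u \<in> S \<Longrightarrow> E r u \<Longrightarrow> u = s" and sym: "\<forall>x y. E x y \<longrightarrow> E y x"
  shows "induced_connected (S - {r}) E"
proof -
  let ?R = "{(a, b). a \<in> S \<and> b \<in> S \<and> E a b}"
  let ?R' = "{(a, b). a \<in> S - {r} \<and> b \<in> S - {r} \<and> E a b}"
  have main: "(y \<noteq> r \<and> (x, y) \<in> ?R'\<^sup>*) \<or> (y = r \<and> (x, s) \<in> ?R'\<^sup>*)"
    if xy: "(x, y) \<in> ?R\<^sup>*" and x: "x \<in> S - {r}" for x y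
    using xy
  proof (induction rule: rtrancl_induct)
    case base then show ?case using x by simp
  next
    case (step y z)
    then have yz: "y \<in> S" "z \<in> S" "E y z" by auto
    from step.IH show ?case
    proof
      assume h: "y \<noteq> r \<and> (x, y) \<in> ?R'\<^sup>*"
      show ?thesis
      proof (cases "z = r")
        case True
        have "E r y" using sym yz(3) True by simp
        then have "y = s" by (rule only[OF yz(1)])
        then show ?thesis using h True by simp
      next
        case False
        then have "(y, z) \<in> ?R'" using yz h by simp
        then have "(x, z) \<in> ?R'\<^sup>*" using h by (meson rtrancl.rtrancl_into_rtrancl)
        then show ?thesis using False by simp
      qed
    next
      assume h: "y = r \<and> (x, s) \<in> ?R'\<^sup>*"
      then have "E r z" using yz by simp
      then have "z = s" by (rule only[OF yz(2)])
      then show ?thesis using h sr by simp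
    qed
  qed
  show ?thesis unfolding induced_connected_def
  proof (intro conjI ballI)
    show "S - {r} \<noteq> {}" using sS sr by blast
  next
    fix x y assume x: "x \<in> S - {r}" and y: "y \<in> S - {r}"
    then have "(x, y) \<in> ?R\<^sup>*" using ic unfolding induced_connected_def by blast
    then show "(x, y) \<in> ?R'\<^sup>*" using main[OF _ x] y by blast
  qed
qed




lemma forb_card:
  assumes "finite F" "card F \<le> a" "finite Y" "card Y \<le> b" "a + b < k"
  shows "card ((if P then {} else F) \<union> Y) < k"
proof -
  have "card ((if P then {} else F) \<union> Y) \<le> card F + card Y"
  proof (cases P)
    case True then show ?thesis by simp
  next
    case False then show ?thesis using card_Un_le[of F Y] by simp
  qed
  then show ?thesis using assms by linarith
qed

lemma main:
  fixes V :: "'a set" and L :: "'a \<Rightarrow> 'c set"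
  shows "k \<ge> 3 \<Longrightarrow> finite V \<Longrightarrow> \<forall>x y. E x y \<longrightarrow> E y x \<Longrightarrow> \<forall>x. \<not> E x x \<Longrightarrow>
    list_assignment k V L \<Longrightarrow> bug V E S r \<Longrightarrow> deg V E r \<le> 1 \<Longrightarrow>
    card S \<ge> 2 \<or> \<not> (\<exists>u\<in>S. \<exists>w\<in>V - S. E u w) \<or> \<not> (k dvd card V) \<Longrightarrow>
    SE_coloring k (V - S) E L f \<Longrightarrow>
    \<exists>g. SE_coloring k V E L g \<and> (\<forall>v\<in>V - S. g v = f v) \<and>
       (card V mod k = k - 1 \<longrightarrow> card (full k V g \<union> {g r}) \<le> k - 1)"
proof (induction "card S" arbitrary: V S r f rule: less_induct)
  case less
  note k = less.prems(1) and fin = less.prems(2) and sym = less.prems(3) and irr = less.prems(4)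
    and la = less.prems(5) and bug = less.prems(6) and dr = less.prems(7) and cond = less.prems(8)
    and SE = less.prems(9)
  have SV: "S \<subseteq> V" and rS: "r \<in> S" and ic: "induced_connected S E" and v3: "S \<inter> V3plus V E \<subseteq> {r}"
    using bug unfolding bug_def by auto
  have rV: "r \<in> V" using SV rS by blast
  have finS: "finite S" using SV fin by (rule finite_subset)
  have k1: "k \<ge> 1" "k \<ge> 2" using k by auto
  have fmod: "card (full k U h) \<le> card U mod k" if "card U mod k \<noteq> 0" "SE_coloring k U E L h" "finite U"
    for U and h :: "'a \<Rightarrow> 'c"
  proof -
    have "U \<noteq> {}" using that(1) by (metis card.empty mod_0)
    then show ?thesis using SE_full[OF that(2)] ms_eq[OF that(1) k1(1)] by simp
  qed
  have ffin: "finite (full k U h)" if "card U mod k \<noteq> 0" "finite U" for U and h :: "'a \<Rightarrow> 'c"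
  proof -
    have "U \<noteq> {}" using that(1) by (metis card.empty mod_0)
    then show ?thesis using full_finite[OF that(2) _ k1(1)] by simp
  qed
  show ?case
  proof (cases "card S \<ge> 2")
    case False
    then have "card S \<le> 1" by simp
    then have S1: "S = {r}" using rS finS by (metis card_1_singleton_iff card_0_eq empty_iff le_SucE le_zero_eq One_nat_def singletonD)
    let ?U = "V - {r}"
    have finU: "finite ?U" using fin by simp
    have cV: "card V = Suc (card ?U)" using rV fin by (metis card_Suc_Diff1)
    have SEU: "SE_coloring k ?U E L f" using SE S1 by simp
    have imgc: "card (f ` {u \<in> ?U. E r u}) \<le> 1" using nbr_img_card[OF fin, of ?U f E r] dr by auto
    have fb: "card ((if card ?U mod k = 0 then {} else full k ?U f) \<union> f ` {u \<in> ?U. E r u}) < k"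
    proof (cases "card ?U mod k = 0")
      case True then show ?thesis using imgc k by simp
    next
      case nz: False
      show ?thesis
      proof (cases "card ?U mod k = k - 1")
        case True
        then have "card V mod k = 0" using cV k by (simp add: mod_Suc)
        then have "k dvd card V" by auto
        then have noe: "\<not> (\<exists>u\<in>S. \<exists>w\<in>V - S. E u w)" using cond False by simp
        have e0: "{u \<in> ?U. E r u} = {}" using noe S1 by auto
        show ?thesis unfolding e0 using fmod[OF nz SEU finU] True nz k by simp
      next
        case False
        have "card ?U mod k < k" using k by simp
        then have "card ?U mod k \<le> k - 2" using False by linarith
        then have lk: "card ?U mod k + 1 < k" using k by linarith
        have fY: "finite (f ` {u \<in> ?U. E r u})" using finU by simp
        show ?thesis by (rule forb_card[OF ffin[OF nz finU, of f] fmod[OF nz SEU finU] fY imgc lk])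
      qed
    qed
    obtain g where g: "SE_coloring k V E L g" "\<forall>v\<in>?U. g v = f v"
      "card V mod k = k - 1 \<longrightarrow> card (full k V g \<union> {g r}) \<le> k - 1"
      using extend_one[OF k fin sym irr la rV SEU fb] by blast
    show ?thesis using g S1 by (intro exI[of _ g]) simp
  next
    case True
    have "\<exists>x\<in>S. x \<noteq> r"
    proof (rule ccontr)
      assume "\<not> (\<exists>x\<in>S. x \<noteq> r)"
      then have "S \<subseteq> {r}" by blast
      then have "card S \<le> card {r}" by (rule card_mono[rotated]) simp
      then show False using True by simp
    qed
    then obtain x where "x \<in> S" "x \<noteq> r" by blast
    then obtain s where sS: "s \<in> S" and ers: "E r s" using conn_nbr[OF ic rS] by blast
    have sr: "s \<noteq> r" using ers irr by auto
    have sV: "s \<in> V" using sS SV by blast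
    have nbV: "finite {u \<in> V. E r u}" using fin by simp
    have nbr: "{u \<in> V. E r u} = {s}"
    proof -
      have "s \<in> {u \<in> V. E r u}" using sV ers by simp
      moreover have "card {u \<in> V. E r u} \<le> 1" using dr unfolding deg_def .
      moreover have "\<forall>x\<in>{u \<in> V. E r u}. \<forall>y\<in>{u \<in> V. E r u}. x = y"
        using card_le_Suc0_iff_eq[OF nbV] calculation(2) by simp
      ultimately show ?thesis by blast
    qed
    have only: "\<And>u. u \<in> V \<Longrightarrow> E r u \<Longrightarrow> u = s" using nbr by blast
    have "s \<notin> V3plus V E" using v3 sS sr by blast
    then have ds: "deg V E s \<le> 2" using sV unfolding V3plus_def by simp
    define V' where "V' = V - {r}"
    define S' where "S' = S - {r}"
    have finV': "finite V'" using fin V'_def by simp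
    have la': "list_assignment k V' L" using la V'_def unfolding list_assignment_def by simp
    have diff: "V' - S' = V - S" using V'_def S'_def rS by blast
    have lt: "card S' < card S" using S'_def finS rS True by simp
    have sV': "s \<in> V'" using sV sr V'_def by simp
    have sS': "s \<in> S'" using sS sr S'_def by simp
    have nbs: "{u \<in> V'. E s u} = {u \<in> V. E s u} - {r}" using V'_def by blast
    have rin: "r \<in> {u \<in> V. E s u}" using rV sym ers by simp
    have degs': "deg V' E s \<le> 1"
    proof -
      have "card ({u \<in> V. E s u} - {r}) = card {u \<in> V. E s u} - 1"
        using rin by (simp add: card_Diff_singleton)
      then show ?thesis using ds nbs unfolding deg_def by simp
    qed
    have bug': "bug V' E S' s" unfolding bug_def
    proof (intro conjI)
      show "S' \<subseteq> V'" using SV S'_def V'_def by blast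
      show "s \<in> S'" by (rule sS')
      show "induced_connected S' E" unfolding S'_def
        by (rule conn_remove[OF ic rS sS sr _ sym]) (use only SV in blast)
      show "S' \<inter> V3plus V' E \<subseteq> {s}"
      proof
        fix x assume x: "x \<in> S' \<inter> V3plus V' E"
        then have "deg V' E x \<ge> 3" "x \<in> V'" unfolding V3plus_def by auto
        moreover have "deg V' E x \<le> deg V E x" unfolding deg_def V'_def
          by (rule card_mono) (use fin in auto)
        ultimately have "x \<in> V3plus V E" unfolding V3plus_def V'_def by auto
        then have "x = r" using v3 x S'_def by blast
        then show "x \<in> {s}" using x S'_def by blast
      qed
    qed
    show ?thesis
    proof (cases "card S' \<ge> 2 \<or> \<not> (\<exists>u\<in>S'. \<exists>w\<in>V' - S'. E u w) \<or> \<not> (k dvd card V')")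
      case True
      have SE': "SE_coloring k (V' - S') E L f" using SE diff by simp
      obtain g' where g': "SE_coloring k V' E L g'" "\<forall>v\<in>V' - S'. g' v = f v"
        "card V' mod k = k - 1 \<longrightarrow> card (full k V' g' \<union> {g' s}) \<le> k - 1"
        using less.hyps[OF lt k finV' sym irr la' bug' degs' True SE'] by blast
      have "{u \<in> V - {r}. E r u} = {s}" using nbr sr by blast
      then have img: "g' ` {u \<in> V - {r}. E r u} = {g' s}" by simp
      have SEV': "SE_coloring k (V - {r}) E L g'" using g'(1) V'_def by simp
      have fb: "card ((if card (V - {r}) mod k = 0 then {} else full k (V - {r}) g') \<union> g' ` {u \<in> V - {r}. E r u}) < k"
      proof (cases "card V' mod k = 0")
        case True then show ?thesis using img k V'_def by simp
      next
        case nz: False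
        show ?thesis
        proof (cases "card V' mod k = k - 1")
          case True then show ?thesis using g'(3) img nz k V'_def by simp
        next
          case False
          have "card V' mod k < k" using k by simp
          then have "card V' mod k \<le> k - 2" using False by linarith
          then have lk: "card V' mod k + 1 < k" using k by linarith
          have "card ((if card V' mod k = 0 then {} else full k V' g') \<union> {g' s}) < k"
            by (rule forb_card[OF ffin[OF nz finV', of g'] fmod[OF nz g'(1) finV'] _ _ lk]) simp_all
          then show ?thesis using img nz unfolding V'_def by simp
        qed
      qed
      obtain g where g: "SE_coloring k V E L g" "\<forall>v\<in>V - {r}. g v = g' v"
        "card V mod k = k - 1 \<longrightarrow> card (full k V g \<union> {g r}) \<le> k - 1"
        using extend_one[OF k fin sym irr la rV SEV' fb] by blast
      have "\<forall>v\<in>V - S. g v = f v"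
      proof
        fix v assume v: "v \<in> V - S"
        then have "v \<in> V - {r}" using rS by blast
        then have "g v = g' v" using g(2) by blast
        moreover have "v \<in> V' - S'" using v diff by simp
        then have "g' v = f v" using g'(2) by blast
        ultimately show "g v = f v" by simp
      qed
      then show ?thesis using g by blast
    next
      case False
      then have cS': "card S' \<le> 1" and ex: "\<exists>u\<in>S'. \<exists>w\<in>V' - S'. E u w" and dv: "k dvd card V'" by auto
      have finS': "finite S'" using finS S'_def by simp
      have "\<forall>x\<in>S'. \<forall>y\<in>S'. x = y" using card_le_Suc0_iff_eq[OF finS'] cS' by simp
      then have S'1: "S' = {s}" using sS' by blast
      have S2: "S = {r, s}" using S'1 S'_def rS by blast
      have sn: "s \<notin> V - S" using sS by blast
      have rn: "r \<notin> V - S" using rS by blast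
      have finVS: "finite (V - S)" using fin by simp
      have V'eq: "V' = insert s (V - S)" using S2 V'_def sV sr by blast
      have cV': "card V' = Suc (card (V - S))" using V'eq sn finVS by simp
      have V1eq: "V - {s} = insert r (V - S)" using S2 rV sr by blast
      have cV1: "card (V - {s}) = Suc (card (V - S))" using V1eq rn finVS by simp
      have "Suc (card (V - S)) mod k = 0" using dv cV' by simp
      then have m0: "card (V - S) mod k = k - 1" using k by (simp add: mod_Suc split: if_splits)
      have nz0: "card (V - S) mod k \<noteq> 0" using m0 k by simp
      have fin1: "finite (V - {s})" using fin by simp
      have la1: "list_assignment k (V - {s}) L" using la unfolding list_assignment_def by simp
      have rV1: "r \<in> V - {s}" using rV sr by simp
      have e1: "V - {s} - {r} = V - S" using S2 by blast
      have SE1: "SE_coloring k (V - {s} - {r}) E L f" using SE e1 by simp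
      have nb1: "{u \<in> V - {s} - {r}. E r u} = {}" using only by blast
      have fb1: "card ((if card (V - {s} - {r}) mod k = 0 then {} else full k (V - {s} - {r}) f) \<union> f ` {u \<in> V - {s} - {r}. E r u}) < k"
        unfolding e1 nb1[unfolded e1] using fmod[OF nz0 SE finVS] nz0 m0 k by simp
      obtain g1 where g1: "SE_coloring k (V - {s}) E L g1" "\<forall>v\<in>V - {s} - {r}. g1 v = f v"
        using extend_one[OF k fin1 sym irr la1 rV1 SE1 fb1] by blast
      have mz: "card (V - {s}) mod k = 0" using cV1 cV' dv by simp
      have fb2: "card ((if card (V - {s}) mod k = 0 then {} else full k (V - {s}) g1) \<union> g1 ` {u \<in> V - {s}. E s u}) < k"
        using nbr_img_card[OF fin, of "V - {s}" g1 E s] ds k mz by simp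
      obtain g where g: "SE_coloring k V E L g" "\<forall>v\<in>V - {s}. g v = g1 v"
        using extend_one[OF k fin sym irr la sV g1(1) fb2] by blast
      have "card V = Suc (card (V - {s}))" using sV fin by (metis card_Suc_Diff1)
      then have "card V mod k = 1" using mz k by (simp add: mod_Suc)
      then have inv: "card V mod k \<noteq> k - 1" using k by simp
      have "\<forall>v\<in>V - S. g v = f v"
      proof
        fix v assume v: "v \<in> V - S"
        then have "v \<in> V - {s}" using sS by blast
        then have "g v = g1 v" using g(2) by blast
        moreover have "g1 v = f v" using g1(2) v e1 by blast
        ultimately show "g v = f v" by simp
      qed
      then show ?thesis using g(1) inv by blast
    qed
  qed
qed


theorem corollary4p4:
  fixes V :: "'a set" and E :: "'a \<Rightarrow> 'a \<Rightarrow> bool" and L :: "'a \<Rightarrow> 'c set"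
    and k :: nat and S :: "'a set" and r :: 'a
  assumes "k \<ge> 3"
    and "graph V E"
    and "list_assignment k V L"
    and "bug V E S r"
    and "deg V E r \<le> 1"
    and "card S \<ge> 2 \<or> \<not> (\<exists>u\<in>S. \<exists>w\<in>V - S. E u w) \<or> \<not> (k dvd card V)"
  shows "safe k V E L S"
proof -
  have fin: "finite V" and sym: "\<forall>x y. E x y \<longrightarrow> E y x" and irr: "\<forall>x. \<not> E x x"
    using assms(2) unfolding graph_def by auto
  show ?thesis unfolding safe_def
  proof (intro allI impI)
    fix f :: "'a \<Rightarrow> 'c" assume SE: "SE_coloring k (V - S) E L f"
    obtain g where "SE_coloring k V E L g" "\<forall>v\<in>V - S. g v = f v"
      using main[OF assms(1) fin sym irr assms(3) assms(4) assms(5) assms(6) SE] by blast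
    then show "\<exists>g. SE_coloring k V E L g \<and> (\<forall>v\<in>V - S. g v = f v)" by blast
  qed
qed

end
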